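(* Let $\zeta_5$ be a primitive fifth root of unity. Then \begin{align*} \frac{(q^2;q^2)_\infty}{(q,\zeta_5q^2,\zeta_5^{-1}q^2;q^2)_\infty}&=\frac{(q^{25};q^{25})_\infty[q^{20};q^{50}]_\infty}{[q^{10};q^{25}]_\infty[q^{10};q^{50}]_\infty}+(\zeta_5+\zeta_5^4)q^5\frac{(q^{50};q^{50})_\infty}{(q^{25};q^{50})_\infty[q^{20};q^{50}]_\infty}+q\frac{(q^{25};q^{25})_\infty}{[q^5;q^{25}]_\infty}\\ &\quad+(\zeta_5+\zeta_5^4)q^2\frac{(q^{25};q^{25})_\infty}{[q^{10};q^{25}]_\infty}+(\zeta_5+\zeta_5^4)q^3\frac{(q^{25};q^{25})_\infty[q^{10};q^{50}]_\infty}{[q^5;q^{25}]_\infty[q^{20};q^{50}]_\infty}+q^3\frac{(q^{50};q^{50})_\infty}{(q^{25};q^{50})_\infty[q^{10};q^{50}]_\infty}. \end{align*}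
   Context: Notation ($|q|<1$): $(z;q)_\infty=\prod_{j\ge0}(1-zq^j)$, $(z_1,\dots,z_k;q)_\infty=(z_1;q)_\infty\cdots(z_k;q)_\infty$, $[z;q]_\infty=(z;q)_\infty(q/z;q)_\infty$. *)

theory Defs
  imports "HOL-Analysis.Analysis"
begin

definition qpoch_inf :: "complex \<Rightarrow> complex \<Rightarrow> complex" where
  "qpoch_inf z q = (\<Prod>j. (1 - z * q ^ j))"

text \<open>Theta-type product [z;q]_\<infinity> = (z;q)_\<infinity> (q/z;q)_\<infinity>.\<close>
definition qtheta_inf :: "complex \<Rightarrow> complex \<Rightarrow> complex" where
  "qtheta_inf z q = qpoch_inf z q * qpoch_inf (q / z) q"

end

theory Submission
  imports Defs
begin
lemma gp_convergent:
  fixes z q :: "'a::{real_normed_field,banach}"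
  assumes "norm q < 1"
  shows "convergent_prod (\<lambda>j. 1 - z * q ^ j)"
proof -
  have "summable (\<lambda>j. norm z * norm q ^ j)"
    using assms by (intro summable_mult summable_geometric) simp
  hence "summable (\<lambda>j. norm ((1 - z * q ^ j) - 1))"
    by (simp add: norm_mult norm_power)
  hence "abs_convergent_prod (\<lambda>j. 1 - z * q ^ j)"
    by (rule summable_imp_abs_convergent_prod)
  thus ?thesis by (rule abs_convergent_prod_imp_convergent_prod)
qed

lemma gp_tendsto:
  fixes z q :: "'a::{real_normed_field,banach}"
  assumes "norm q < 1"
  shows "(\<lambda>n. \<Prod>j<n. 1 - z * q ^ j) \<longlonglongrightarrow> (\<Prod>j. 1 - z * q ^ j)"
proof -
  have "(\<lambda>n. \<Prod>j\<le>n. 1 - z * q ^ j) \<longlonglongrightarrow> (\<Prod>j. 1 - z * q ^ j)"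
    by (rule convergent_prod_LIMSEQ[OF gp_convergent[OF assms]])
  hence "(\<lambda>n. \<Prod>j<Suc n. 1 - z * q ^ j) \<longlonglongrightarrow> (\<Prod>j. 1 - z * q ^ j)"
    by (simp add: lessThan_Suc_atMost)
  thus ?thesis by (rule LIMSEQ_imp_Suc)
qed

lemma qp_tendsto:
  assumes "norm q < 1"
  shows "(\<lambda>n. \<Prod>j<n. 1 - z * q ^ j) \<longlonglongrightarrow> qpoch_inf z q"
  unfolding qpoch_inf_def by (rule gp_tendsto[OF assms])

lemma gp_nonzero:
  fixes z q :: "'a::{real_normed_field,banach}"
  assumes "norm q < 1" "norm z < 1"
  shows "(\<Prod>j. 1 - z * q ^ j) \<noteq> 0"
proof (rule prodinf_nonzero[OF gp_convergent[OF assms(1)]])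
  fix i
  have "norm (z * q ^ i) \<le> norm z"
    using assms by (simp add: norm_mult norm_power mult_left_le power_le_one)
  hence "norm (z * q ^ i) < 1" using assms by linarith
  thus "1 - z * q ^ i \<noteq> 0" by auto
qed

lemma qp_nonzero:
  assumes "norm q < 1" "norm z < 1"
  shows "qpoch_inf z q \<noteq> 0"
  unfolding qpoch_inf_def by (rule gp_nonzero[OF assms])

lemma qp_shift:
  assumes "norm q < 1"
  shows "qpoch_inf z q = (1 - z) * qpoch_inf (z * q) q"
proof -
  have 1: "(\<lambda>n. \<Prod>j<Suc n. 1 - z * q ^ j) \<longlonglongrightarrow> qpoch_inf z q"
    using qp_tendsto[OF assms] by (rule LIMSEQ_Suc)
  have 2: "(\<lambda>n. (1 - z) * (\<Prod>j<n. 1 - (z * q) * q ^ j)) \<longlonglongrightarrow> (1 - z) * qpoch_inf (z * q) q"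
    by (intro tendsto_intros qp_tendsto[OF assms])
  have "(\<Prod>j<Suc n. 1 - z * q ^ j) = (1 - z) * (\<Prod>j<n. 1 - (z * q) * q ^ j)" for n
    by (subst prod.lessThan_Suc_shift) (simp add: mult.assoc mult.commute mult.left_commute)
  with 1 2 show ?thesis using LIMSEQ_unique by auto
qed

lemma qp_sq:
  assumes "norm q < 1"
  shows "qpoch_inf (-a) q * qpoch_inf a q = qpoch_inf (a^2) (q^2)"
proof -
  have 1: "(\<lambda>n. (\<Prod>j<n. 1 - (-a) * q ^ j) * (\<Prod>j<n. 1 - a * q ^ j)) \<longlonglongrightarrow> qpoch_inf (-a) q * qpoch_inf a q"
    by (intro tendsto_intros qp_tendsto[OF assms])
  have "norm (q^2) < 1" using assms by (simp add: norm_power power_less_one_iff)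
  note 2 = qp_tendsto[OF this, of "a^2"]
  have "(\<Prod>j<n. 1 - (-a) * q ^ j) * (\<Prod>j<n. 1 - a * q ^ j) = (\<Prod>j<n. 1 - a^2 * (q^2) ^ j)" for n
    by (simp add: prod.distrib[symmetric] power2_eq_square power_mult_distrib algebra_simps
        flip: power_mult) 
  with 1 2 show ?thesis using LIMSEQ_unique by auto
qed

lemma prod_blocks:
  fixes f :: "nat \<Rightarrow> 'a::comm_monoid_mult"
  shows "(\<Prod>j<k*n. f j) = (\<Prod>m<n. \<Prod>r<k. f (k*m + r))"
proof (induction n)
  case 0 then show ?case by simp
next
  case (Suc n)
  have "(\<Prod>j<k*Suc n. f j) = (\<Prod>j<k*n. f j) * (\<Prod>j\<in>{k*n..<k*n+k}. f j)"
    by (simp add: prod.atLeastLessThan_concat[symmetric] atLeast0LessThan[symmetric]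
        prod.atLeastLessThan_concat add.commute)
  also have "(\<Prod>j\<in>{k*n..<k*n+k}. f j) = (\<Prod>r<k. f (k*n + r))"
    by (subst prod.atLeastLessThan_shift_0) (simp add: atLeast0LessThan add.commute)
  finally show ?case using Suc by simp
qed

lemma qp_split:
  assumes "norm q < 1" "k > 0"
  shows "qpoch_inf a q = (\<Prod>r<k. qpoch_inf (a * q^r) (q^k))"
proof -
  have 1: "(\<lambda>n. \<Prod>j<k*n. 1 - a * q ^ j) \<longlonglongrightarrow> qpoch_inf a q"
  proof -
    have "strict_mono (\<lambda>n. k*n)" using assms(2) by (intro strict_monoI) simp
    from LIMSEQ_subseq_LIMSEQ[OF qp_tendsto[OF assms(1)] this] show ?thesis by (simp add: o_def)
  qed
  have nq: "norm (q^k) < 1" using assms by (simp add: norm_power power_less_one_iff)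
  have 2: "(\<lambda>n. \<Prod>r<k. \<Prod>m<n. 1 - (a * q^r) * (q^k) ^ m) \<longlonglongrightarrow> (\<Prod>r<k. qpoch_inf (a * q^r) (q^k))"
    by (intro tendsto_prod qp_tendsto[OF nq])
  have "(\<Prod>j<k*n. 1 - a * q ^ j) = (\<Prod>r<k. \<Prod>m<n. 1 - (a * q^r) * (q^k) ^ m)" for n
  proof -
    have "(\<Prod>j<k*n. 1 - a * q ^ j) = (\<Prod>m<n. \<Prod>r<k. 1 - a * q ^ (k*m+r))" by (rule prod_blocks)
    also have "\<dots> = (\<Prod>r<k. \<Prod>m<n. 1 - a * q ^ (k*m+r))" by (rule prod.swap)
    also have "\<dots> = (\<Prod>r<k. \<Prod>m<n. 1 - (a * q^r) * (q^k) ^ m)"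
      by (intro prod.cong refl) (simp add: power_add mult.commute mult.left_commute flip: power_mult)
    finally show ?thesis .
  qed
  with 1 2 show ?thesis using LIMSEQ_unique by auto
qed

lemma qp_split2:
  assumes "norm q < 1"
  shows "qpoch_inf a q = qpoch_inf a (q^2) * qpoch_inf (a * q) (q^2)"
  using qp_split[OF assms, of 2 a] by (simp add: numeral_2_eq_2)

lemma qp_split5:
  assumes "norm q < 1"
  shows "qpoch_inf a q = qpoch_inf a (q^5) * qpoch_inf (a * q) (q^5) * qpoch_inf (a * q^2) (q^5)
     * qpoch_inf (a * q^3) (q^5) * qpoch_inf (a * q^4) (q^5)"
  using qp_split[OF assms, of 5 a] by (simp add: numeral_eq_Suc mult.assoc)

fun tri :: "nat \<Rightarrow> nat" where
  "tri 0 = 0" | "tri (Suc k) = tri k + k"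

lemma tri_add: "tri (a + b) = tri a + tri b + a * b"
  by (induction b) (simp_all add: algebra_simps)

lemma two_tri: "2 * tri k = k * (k - 1)"
proof (induction k)
  case (Suc k) thus ?case by (cases k) (simp_all add: algebra_simps)
qed simp

definition qpf :: "complex \<Rightarrow> nat \<Rightarrow> complex" where
  "qpf q n = (\<Prod>j<n. 1 - q ^ Suc j)"

definition qbin :: "complex \<Rightarrow> nat \<Rightarrow> nat \<Rightarrow> complex" where
  "qbin q N k = (if k \<le> N then qpf q N / (qpf q k * qpf q (N - k)) else 0)"

lemma qpf_Suc: "qpf q (Suc n) = qpf q n * (1 - q ^ Suc n)"
  by (simp add: qpf_def)

lemma qpf_nz: assumes "norm q < 1" shows "qpf q n \<noteq> 0"
proof -
  have "1 - q ^ Suc j \<noteq> 0" for j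
  proof
    assume "1 - q ^ Suc j = 0"
    hence "q ^ Suc j = 1" by simp
    hence "norm (q ^ Suc j) = 1" by simp
    moreover have "norm (q ^ Suc j) < 1" using assms
      by (simp only: norm_power power_less_one_iff norm_ge_zero) simp
    ultimately show False by simp
  qed
  thus ?thesis unfolding qpf_def by (subst prod_zero_iff) auto
qed

lemma qbin_0: "norm q < 1 \<Longrightarrow> qbin q N 0 = 1"
  using qpf_nz[of q N] by (simp add: qbin_def qpf_def)

lemma qbin_gt [simp]: "N < k \<Longrightarrow> qbin q N k = 0"
  by (simp add: qbin_def)

lemma qbin_pascal:
  assumes "norm q < 1"
  shows "qbin q (Suc N) (Suc k) = qbin q N (Suc k) + q ^ (N - k) * qbin q N k"
proof (cases "k \<le> N")
  case False thus ?thesis by simp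
next
  case True
  note nz = qpf_nz[OF assms]
  show ?thesis
  proof (cases "k = N")
    case True
    thus ?thesis using nz by (simp add: qbin_def)
  next
    case False
    with \<open>k \<le> N\<close> have "k < N" by simp
    then obtain d where N: "N = k + Suc d" using less_imp_Suc_add by fastforce
    have e1: "Suc N - Suc k = Suc d" "N - Suc k = d" "N - k = Suc d" using N by auto
    have "qbin q (Suc N) (Suc k) = qpf q (Suc N) / (qpf q (Suc k) * qpf q (Suc d))"
      using N by (simp add: qbin_def e1)
    moreover have "qbin q N (Suc k) = qpf q N / (qpf q (Suc k) * qpf q d)"
      using N by (simp add: qbin_def e1)
    moreover have "qbin q N k = qpf q N / (qpf q k * qpf q (Suc d))"
      using N by (simp add: qbin_def e1)
    moreover have "q ^ Suc N = q ^ Suc k * q ^ Suc d" using N by (simp flip: power_add)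
    moreover have "q ^ (N - k) = q ^ Suc d" using e1 by simp
    moreover have "1 - q ^ Suc k \<noteq> 0" "1 - q ^ Suc d \<noteq> 0"
      using nz[of "Suc k"] nz[of "Suc d"] by (auto simp: qpf_Suc)
    ultimately show ?thesis
      using nz[of N] nz[of k] nz[of d]
      unfolding e1 qpf_Suc
    proof (simp only:)
      fix u v A P1 P2 :: complex
      assume "1 - u \<noteq> 0" "1 - v \<noteq> 0" "A \<noteq> 0" "P1 \<noteq> 0" "P2 \<noteq> 0"
      thus "A * (1 - u * v) / (P1 * (1 - u) * (P2 * (1 - v))) = A / (P1 * (1 - u) * P2) + v * (A / (P1 * (P2 * (1 - v))))"
        by (simp add: divide_simps) (simp add: algebra_simps)
    qed
  qed
qed

lemma qbinomial:
  assumes "norm q < 1"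
  shows "(\<Prod>j<N. a + b * q ^ j) = (\<Sum>k\<le>N. qbin q N k * q ^ tri k * b ^ k * a ^ (N - k))"
proof (induction N)
  case 0 thus ?case using qbin_0[OF assms] by simp
next
  case (Suc N)
  have "(\<Prod>j<Suc N. a + b * q ^ j) = (a + b * q ^ N) * (\<Sum>k\<le>N. qbin q N k * q ^ tri k * b ^ k * a ^ (N - k))"
    using Suc by simp
  also have "\<dots> = (\<Sum>k\<le>N. qbin q N k * q ^ tri k * b ^ k * a ^ (Suc N - k))
      + (\<Sum>k\<le>N. qbin q N k * q ^ tri k * q ^ N * b ^ Suc k * a ^ (N - k))"
    by (simp add: algebra_simps sum_distrib_left Suc_diff_le sum.distrib)
  also have "(\<Sum>k\<le>N. qbin q N k * q ^ tri k * b ^ k * a ^ (Suc N - k))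
      = (\<Sum>k\<le>Suc N. qbin q N k * q ^ tri k * b ^ k * a ^ (Suc N - k))"
    by simp
  also have "\<dots> = a ^ Suc N + (\<Sum>k\<le>N. qbin q N (Suc k) * q ^ tri (Suc k) * b ^ Suc k * a ^ (N - k))"
    by (subst sum.atMost_Suc_shift) (simp add: qbin_0[OF assms])
  also have "(\<Sum>k\<le>N. qbin q N k * q ^ tri k * q ^ N * b ^ Suc k * a ^ (N - k))
     = (\<Sum>k\<le>N. q ^ (N - k) * qbin q N k * q ^ tri (Suc k) * b ^ Suc k * a ^ (N - k))"
  proof (intro sum.cong refl)
    fix k assume "k \<in> {..N}"
    hence "N = (N - k) + k" by simp
    hence "q ^ N = q ^ (N - k) * q ^ k" by (metis power_add)
    thus "qbin q N k * q ^ tri k * q ^ N * b ^ Suc k * a ^ (N - k) =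
         q ^ (N - k) * qbin q N k * q ^ tri (Suc k) * b ^ Suc k * a ^ (N - k)"
      by (simp add: power_add algebra_simps)
  qed
  also have "a ^ Suc N + (\<Sum>k\<le>N. qbin q N (Suc k) * q ^ tri (Suc k) * b ^ Suc k * a ^ (N - k))
     + (\<Sum>k\<le>N. q ^ (N - k) * qbin q N k * q ^ tri (Suc k) * b ^ Suc k * a ^ (N - k))
     = a ^ Suc N + (\<Sum>k\<le>N. qbin q (Suc N) (Suc k) * q ^ tri (Suc k) * b ^ Suc k * a ^ (N - k))"
    by (simp add: qbin_pascal[OF assms] algebra_simps sum.distrib)
  also have "\<dots> = (\<Sum>k\<le>Suc N. qbin q (Suc N) k * q ^ tri k * b ^ k * a ^ (Suc N - k))"
    by (subst sum.atMost_Suc_shift) (simp add: qbin_0[OF assms])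
  finally show ?case .
qed

lemma tri_Suc2: "tri (Suc k) * 2 = Suc k * k"
  using two_tri[of "Suc k"] by simp

lemma prod_pow_tri: "(\<Prod>j<n. (q::'a::comm_monoid_mult) ^ j) = q ^ tri n"
  by (induction n) (simp_all add: power_add)

lemma prod_lessThan_add: "(\<Prod>j<n+m. f j) = (\<Prod>j<n. f j) * (\<Prod>i<m. f (n+i))"
  for f :: "nat \<Rightarrow> 'a::comm_monoid_mult"
  by (induction m) (simp_all add: mult.assoc)

lemma sum_lessThan_add: "(\<Sum>j<n+m. f j) = (\<Sum>j<n. f j) + (\<Sum>i<m. f (n+i))"
  for f :: "nat \<Rightarrow> 'a::comm_monoid_add"
  by (induction m) (simp_all add: add.assoc)

lemma exp_id1: "l \<le> n \<Longrightarrow> tri (n+l) + n*(2*n-(n+l)) = tri n + n*n + tri l"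
proof -
  assume "l \<le> n"
  then obtain d where n: "n = l + d" using le_Suc_ex by blast
  show ?thesis unfolding tri_add n by (simp add: algebra_simps)
qed

lemma exp_id2: "n = k + Suc l \<Longrightarrow> tri k + n*(2*n-k) = tri n + n*n + tri(l+2)"
proof -
  assume n: "n = k + Suc l"
  have a: "tri n = tri k + tri (Suc l) + k * Suc l" using n tri_add by simp
  have b: "tri (l+2) = tri (Suc l) + Suc l" by simp
  have c: "2*n - k = k + 2 * Suc l" using n by simp
  have d: "tri (Suc l) * 2 = Suc l * l" by (rule tri_Suc2)
  show ?thesis unfolding a b c using d unfolding n
    by (simp add: algebra_simps) 
qed

lemma fin_jtp:
  assumes q: "norm q < 1" "q \<noteq> 0" and x: "x \<noteq> 0"
  shows "(\<Prod>m<n. 1 + q^Suc m / x) * (\<Prod>i<n. 1 + x*q^i)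
    = (\<Sum>l\<le>n. qbin q (2*n) (n+l) * q^tri l * x^l)
      + (\<Sum>l<n. qbin q (2*n) (n - Suc l) * q^tri(l+2) * (1/x)^Suc l)"
proof -
  define C where "C = q^(tri n + n*n) * x^n"
  have Cnz: "C \<noteq> 0" using q x by (simp add: C_def)
  define f where "f j = q^n + x * q^j" for j
  define g where "g k = qbin q (2*n) k * q ^ tri k * x ^ k * (q^n) ^ (2*n - k)" for k
  have h1: "(\<Prod>j<n. f j) = q^tri n * x^n * (\<Prod>m<n. 1 + q^Suc m / x)"
  proof -
    have "(\<Prod>j<n. f j) = (\<Prod>m<n. f (n - Suc m))" by (rule prod.nat_diff_reindex[symmetric])
    also have "\<dots> = (\<Prod>m<n. q^(n - Suc m) * x * (1 + q^Suc m / x))"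
    proof (intro prod.cong refl)
      fix m assume "m \<in> {..<n}"
      hence "n = (n - Suc m) + Suc m" by simp
      hence "q^n = q^(n - Suc m) * q^Suc m" by (metis power_add)
      thus "f (n - Suc m) = q^(n - Suc m) * x * (1 + q^Suc m / x)"
        using x by (simp add: f_def field_simps)
    qed
    also have "\<dots> = (\<Prod>m<n. q^(n - Suc m)) * x^n * (\<Prod>m<n. 1 + q^Suc m / x)"
      by (simp add: prod.distrib)
    also have "(\<Prod>m<n. q^(n - Suc m)) = q ^ tri n"
      using prod.nat_diff_reindex[of "\<lambda>j. q^j" n] prod_pow_tri by simp
    finally show ?thesis .
  qed
  have h2: "(\<Prod>i<n. f (n+i)) = q^(n*n) * (\<Prod>i<n. 1 + x*q^i)"
  proof -
    have "(\<Prod>i<n. f (n+i)) = (\<Prod>i<n. q^n * (1 + x*q^i))"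
      by (intro prod.cong refl) (simp add: f_def power_add algebra_simps)
    thus ?thesis by (simp add: prod.distrib power_mult)
  qed
  have "C * ((\<Prod>m<n. 1 + q^Suc m / x) * (\<Prod>i<n. 1 + x*q^i)) = (\<Prod>j<n+n. f j)"
    unfolding prod_lessThan_add h1 h2 C_def by (simp add: power_add algebra_simps)
  also have "\<dots> = (\<Sum>k\<le>2*n. g k)"
    unfolding f_def g_def using qbinomial[OF q(1), where N="2*n" and a="q^n" and b=x] by (simp add: mult_2)
  also have "\<dots> = (\<Sum>k<n. g k) + (\<Sum>l\<le>n. g (n+l))"
  proof -
    have "{..2*n} = {..<n + Suc n}" by auto
    thus ?thesis by (simp only: sum_lessThan_add lessThan_Suc_atMost)
  qed
  also have "(\<Sum>k<n. g k) = (\<Sum>l<n. g (n - Suc l))" by (rule sum.nat_diff_reindex[symmetric])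
  also have "\<dots> = (\<Sum>l<n. C * (qbin q (2*n) (n - Suc l) * q^tri(l+2) * (1/x)^Suc l))"
  proof (intro sum.cong refl)
    fix l assume "l \<in> {..<n}"
    then obtain k where n: "n = k + Suc l" and k: "k = n - Suc l" by auto
    have e: "q ^ tri k * (q^n) ^ (2*n - k) = q^(tri n + n*n) * q^tri(l+2)"
      unfolding power_mult[symmetric] power_add[symmetric] using exp_id2[OF n] by simp
    have xe: "x ^ k = x^n * (1/x)^Suc l" using x unfolding n by (simp add: power_add field_simps)
    show "g (n - Suc l) = C * (qbin q (2*n) (n - Suc l) * q^tri(l+2) * (1/x)^Suc l)"
      unfolding g_def C_def k[symmetric] using e xe
      by (simp add: algebra_simps)
  qed
  also have "(\<Sum>l\<le>n. g (n+l)) = (\<Sum>l\<le>n. C * (qbin q (2*n) (n+l) * q^tri l * x^l))"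
  proof (intro sum.cong refl)
    fix l assume "l \<in> {..n}"
    hence "l \<le> n" by simp
    have e: "q ^ tri (n+l) * (q^n) ^ (2*n - (n+l)) = q^(tri n + n*n) * q^tri l"
      unfolding power_mult[symmetric] power_add[symmetric] using exp_id1[OF \<open>l \<le> n\<close>] by simp
    show "g (n+l) = C * (qbin q (2*n) (n+l) * q^tri l * x^l)"
      unfolding g_def C_def using e
      by (simp add: algebra_simps power_add)
  qed
  finally have "C * ((\<Prod>m<n. 1 + q^Suc m / x) * (\<Prod>i<n. 1 + x*q^i)) =
     C * ((\<Sum>l\<le>n. qbin q (2*n) (n+l) * q^tri l * x^l)
      + (\<Sum>l<n. qbin q (2*n) (n - Suc l) * q^tri(l+2) * (1/x)^Suc l))"
    by (simp add: sum_distrib_left algebra_simps)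
  thus ?thesis using Cnz by simp
qed

lemma qpf_tendsto_gen:
  assumes "norm q < 1" "filterlim h sequentially sequentially"
  shows "(\<lambda>n. qpf q (h n)) \<longlonglongrightarrow> qpoch_inf q q"
proof -
  have "(\<lambda>n. qpf q n) \<longlonglongrightarrow> qpoch_inf q q"
    using qp_tendsto[OF assms(1), of q] by (simp add: qpf_def)
  from filterlim_compose[OF this assms(2)] show ?thesis .
qed

lemma qpinf_qq_nz: "norm q < 1 \<Longrightarrow> qpoch_inf q q \<noteq> 0"
  by (rule qp_nonzero) auto

lemma qbin_lim1:
  assumes "norm q < 1"
  shows "(\<lambda>n. qbin q (2*n) (n+l)) \<longlonglongrightarrow> 1 / qpoch_inf q q"
proof -
  have f1: "filterlim (\<lambda>n::nat. 2*n) sequentially sequentially"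
    by (rule filterlim_subseq) (auto intro: strict_monoI)
  have "(\<lambda>n. qpf q (2*n) / (qpf q (n+l) * qpf q (n-l))) \<longlonglongrightarrow>
        qpoch_inf q q / (qpoch_inf q q * qpoch_inf q q)"
    by (intro tendsto_intros qpf_tendsto_gen[OF assms] f1 filterlim_add_const_nat_at_top
        filterlim_minus_const_nat_at_top) (use qpinf_qq_nz[OF assms] in simp)
  moreover have "eventually (\<lambda>n. qpf q (2*n) / (qpf q (n+l) * qpf q (n-l)) = qbin q (2*n) (n+l)) sequentially"
    using eventually_ge_at_top[of l] by eventually_elim (simp add: qbin_def mult_2)
  ultimately have "(\<lambda>n. qbin q (2*n) (n+l)) \<longlonglongrightarrow> qpoch_inf q q / (qpoch_inf q q * qpoch_inf q q)"
    by (rule Lim_transform_eventually)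
  thus ?thesis using qpinf_qq_nz[OF assms] by simp
qed

lemma qbin_lim2:
  assumes "norm q < 1"
  shows "(\<lambda>n. qbin q (2*n) (n - Suc l)) \<longlonglongrightarrow> 1 / qpoch_inf q q"
proof -
  have f1: "filterlim (\<lambda>n::nat. 2*n) sequentially sequentially"
    by (rule filterlim_subseq) (auto intro: strict_monoI)
  have "(\<lambda>n. qpf q (2*n) / (qpf q (n - Suc l) * qpf q (n + Suc l))) \<longlonglongrightarrow>
        qpoch_inf q q / (qpoch_inf q q * qpoch_inf q q)"
    by (intro tendsto_intros qpf_tendsto_gen[OF assms] f1 filterlim_add_const_nat_at_top
        filterlim_minus_const_nat_at_top) (use qpinf_qq_nz[OF assms] in simp)
  moreover have "eventually (\<lambda>n. qpf q (2*n) / (qpf q (n - Suc l) * qpf q (n + Suc l)) = qbin q (2*n) (n - Suc l)) sequentially"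
    using eventually_ge_at_top[of "Suc l"] 
  proof eventually_elim
    case (elim n)
    hence "2*n - (n - Suc l) = n + Suc l" by simp
    thus ?case by (simp add: qbin_def)
  qed
  ultimately have "(\<lambda>n. qbin q (2*n) (n - Suc l)) \<longlonglongrightarrow> qpoch_inf q q / (qpoch_inf q q * qpoch_inf q q)"
    by (rule Lim_transform_eventually)
  thus ?thesis using qpinf_qq_nz[OF assms] by simp
qed

definition rlow :: "real \<Rightarrow> real" where "rlow t = (\<Prod>j. 1 - t * t ^ j)"
definition rupp :: "real \<Rightarrow> real" where "rupp t = (\<Prod>j. 1 - (-t) * t ^ j)"

lemma rlow_props:
  assumes "0 \<le> t" "t < 1"
  shows "rlow t > 0" "\<And>k. rlow t \<le> (\<Prod>j<k. 1 - t * t ^ j)"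
proof -
  have lim: "(\<lambda>k. \<Prod>j<k. 1 - t * t ^ j) \<longlonglongrightarrow> rlow t"
    unfolding rlow_def by (rule gp_tendsto) (use assms in simp)
  have fac: "0 \<le> 1 - t * t ^ j" "1 - t * t ^ j \<le> 1" for j
  proof -
    have "t * t ^ j \<le> 1" using assms by (simp add: mult_le_one power_le_one)
    thus "0 \<le> 1 - t * t ^ j" by simp
    show "1 - t * t ^ j \<le> 1" using assms by simp
  qed
  have dec: "decseq (\<lambda>k. \<Prod>j<k. 1 - t * t ^ j)"
  proof (rule decseq_SucI)
    fix n
    have "(\<Prod>j<n. 1 - t * t ^ j) * (1 - t * t ^ n) \<le> (\<Prod>j<n. 1 - t * t ^ j)"
      by (rule mult_left_le[OF fac(2)]) (auto intro: prod_nonneg fac)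
    thus "(\<Prod>j<Suc n. 1 - t * t ^ j) \<le> (\<Prod>j<n. 1 - t * t ^ j)" by simp
  qed
  show "\<And>k. rlow t \<le> (\<Prod>j<k. 1 - t * t ^ j)" using decseq_ge[OF dec lim] .
  have "rlow t \<ge> 0"
    by (rule LIMSEQ_le_const[OF lim]) (auto intro: prod_nonneg fac)
  moreover have "rlow t \<noteq> 0" unfolding rlow_def by (rule gp_nonzero) (use assms in auto)
  ultimately show "rlow t > 0" by simp
qed

lemma rupp_props:
  assumes "0 \<le> t" "t < 1"
  shows "\<And>k. (\<Prod>j<k. 1 + t * t ^ j) \<le> rupp t"
proof -
  have lim: "(\<lambda>k. \<Prod>j<k. 1 - (-t) * t ^ j) \<longlonglongrightarrow> rupp t"
    unfolding rupp_def by (rule gp_tendsto) (use assms in simp)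
  have inc: "incseq (\<lambda>k. \<Prod>j<k. 1 - (-t) * t ^ j)"
  proof (rule incseq_SucI)
    fix n
    have P: "0 \<le> (\<Prod>j<n. 1 + t * t ^ j)" using assms by (intro prod_nonneg) simp
    have "1 \<le> 1 + t * t ^ n" using assms by simp
    from mult_left_mono[OF this P] 
    show "(\<Prod>j<n. 1 - (-t) * t ^ j) \<le> (\<Prod>j<Suc n. 1 - (-t) * t ^ j)" by simp
  qed
  show "\<And>k. (\<Prod>j<k. 1 + t * t ^ j) \<le> rupp t" using incseq_le[OF inc lim] by simp
qed

lemma qbin_bound:
  assumes "norm q < 1"
  shows "norm (qbin q N k) \<le> rupp (norm q) / (rlow (norm q))^2"
proof (cases "k \<le> N")
  case False
  have "1 \<le> rupp (norm q)" using rupp_props[of "norm q" 0] assms by simp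
  moreover have "rlow (norm q) > 0" using rlow_props(1)[of "norm q"] assms by simp
  ultimately have "0 \<le> rupp (norm q) / (rlow (norm q))^2" by simp
  thus ?thesis using False by (simp add: qbin_def)
next
  case True
  define t where "t = norm q"
  have t: "0 \<le> t" "t < 1" using assms by (auto simp: t_def)
  have up: "norm (qpf q n) \<le> rupp t" for n
  proof -
    have "norm (qpf q n) = (\<Prod>j<n. norm (1 - q ^ Suc j))" by (simp add: qpf_def prod_norm)
    also have "\<dots> \<le> (\<Prod>j<n. 1 + t * t ^ j)"
    proof (intro prod_mono conjI)
      fix j show "0 \<le> norm (1 - q ^ Suc j)" by simp
      have "norm (1 - q ^ Suc j) \<le> norm (1::complex) + norm (q ^ Suc j)" by (rule norm_triangle_ineq4)
      thus "norm (1 - q ^ Suc j) \<le> 1 + t * t ^ j" by (simp add: t_def norm_power norm_mult)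
    qed
    also have "\<dots> \<le> rupp t" by (rule rupp_props[OF t])
    finally show ?thesis .
  qed
  have low: "rlow t \<le> norm (qpf q n)" for n
  proof -
    have "rlow t \<le> (\<Prod>j<n. 1 - t * t ^ j)" by (rule rlow_props(2)[OF t])
    also have "\<dots> \<le> (\<Prod>j<n. norm (1 - q ^ Suc j))"
    proof (intro prod_mono conjI)
      fix j
      have "t * t ^ j \<le> 1" using t by (simp add: mult_le_one power_le_one)
      thus "0 \<le> 1 - t * t ^ j" by simp
      have "norm (1::complex) - norm (q ^ Suc j) \<le> norm (1 - q ^ Suc j)" by (rule norm_triangle_ineq2)
      thus "1 - t * t ^ j \<le> norm (1 - q ^ Suc j)" by (simp add: t_def norm_power norm_mult)
    qed
    also have "\<dots> = norm (qpf q n)" by (simp add: qpf_def prod_norm)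
    finally show ?thesis .
  qed
  have rl: "rlow t > 0" by (rule rlow_props(1)[OF t])
  have "norm (qbin q N k) = norm (qpf q N) / (norm (qpf q k) * norm (qpf q (N - k)))"
    using True by (simp add: qbin_def norm_divide norm_mult)
  also have "\<dots> \<le> rupp t / (rlow t * rlow t)"
  proof (rule frac_le)
    show "0 \<le> rupp t" using rupp_props[OF t, of 0] by simp
    show "norm (qpf q N) \<le> rupp t" by (rule up)
    show "0 < rlow t * rlow t" using rl by simp
    show "rlow t * rlow t \<le> norm (qpf q k) * norm (qpf q (N - k))"
      by (intro mult_mono low) (use rl in auto)
  qed
  finally show ?thesis by (simp add: t_def power2_eq_square)
qed

lemma summable_theta:
  fixes t r :: real
  assumes "0 \<le> t" "t < 1" "0 \<le> r"
  shows "summable (\<lambda>l. t ^ tri (l + c) * r ^ l)"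
proof -
  have "(\<lambda>l. t ^ l * r) \<longlonglongrightarrow> 0 * r"
    by (intro tendsto_intros LIMSEQ_power_zero) (use assms in simp)
  hence "eventually (\<lambda>l. t ^ l * r < 1/2) sequentially"
    by (rule order_tendstoD) simp_all
  then obtain N where N: "\<And>l. l \<ge> N \<Longrightarrow> t ^ l * r < 1/2" by (auto simp: eventually_at_top_linorder)
  show ?thesis
  proof (rule summable_ratio_test[of "1/2" N])
    fix l assume "l \<ge> N"
    have "t ^ (l + c) \<le> t ^ l" using assms by (intro power_decreasing) auto
    hence "t ^ (l + c) * r \<le> 1/2" using N[OF \<open>l \<ge> N\<close>] assms by (meson less_le_trans mult_right_mono less_imp_le order.trans)
    moreover have "0 \<le> t ^ tri (l + c) * r ^ l" using assms by simp
    ultimately have i: "(t ^ (l + c) * r) * (t ^ tri (l + c) * r ^ l) \<le> 1/2 * (t ^ tri (l + c) * r ^ l)"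
      by (rule mult_right_mono)
    have "tri (Suc l + c) = tri (l + c) + (l + c)" by simp
    hence e: "t ^ tri (Suc l + c) * r ^ Suc l = (t ^ (l + c) * r) * (t ^ tri (l + c) * r ^ l)"
      by (simp only: power_add power_Suc ac_simps)
    have n1: "norm (t ^ tri (Suc l + c) * r ^ Suc l) = t ^ tri (Suc l + c) * r ^ Suc l"
      using assms by (simp only: real_norm_def abs_of_nonneg zero_le_power zero_le_mult_iff) simp
    have n2: "norm (t ^ tri (l + c) * r ^ l) = t ^ tri (l + c) * r ^ l"
      using assms by (simp only: real_norm_def abs_of_nonneg zero_le_power zero_le_mult_iff) simp
    show "norm (t ^ tri (Suc l + c) * r ^ Suc l) \<le> 1/2 * norm (t ^ tri (l + c) * r ^ l)"
      unfolding n1 n2 unfolding e by (rule i)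
  qed simp
qed

lemma tannery_app:
  fixes w :: "nat \<Rightarrow> nat \<Rightarrow> complex"
  assumes lim: "\<And>k. (\<lambda>n. w k n) \<longlonglongrightarrow> L"
    and bound: "\<And>k n. norm (w k n) \<le> B"
    and sc: "summable (\<lambda>k. norm (c k))"
    and fin: "\<And>n. finite (A n)"
    and ev: "\<And>k. eventually (\<lambda>n. k \<in> A n) sequentially"
  shows "(\<lambda>n. \<Sum>k\<in>A n. w k n * c k) \<longlonglongrightarrow> L * (\<Sum>k. c k)"
proof -
  define a where "a k n = (if k \<in> A n then w k n * c k else 0)" for k n
  have B: "0 \<le> B" using bound[of 0 0] norm_ge_zero order.trans by blast
  have T: "eventually (\<lambda>n. summable (\<lambda>k. norm (a k n))) sequentially \<and>
           summable (\<lambda>n. norm (L * c n)) \<and>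
           ((\<lambda>n. suminf (\<lambda>k. a k n)) \<longlongrightarrow> suminf (\<lambda>k. L * c k)) sequentially"
  proof (rule tannerys_theorem[where M = "\<lambda>k. B * norm (c k)"])
    fix k
    have "(\<lambda>n. w k n * c k) \<longlonglongrightarrow> L * c k" by (intro tendsto_intros lim)
    moreover have "eventually (\<lambda>n. w k n * c k = a k n) sequentially"
      using ev[of k] by eventually_elim (simp add: a_def)
    ultimately show "(\<lambda>n. a k n) \<longlonglongrightarrow> L * c k" by (rule Lim_transform_eventually)
  next
    show "eventually (\<lambda>(k,n). norm (a k n) \<le> B * norm (c k)) (at_top \<times>\<^sub>F sequentially)"
      by (intro always_eventually allI) (auto simp: a_def norm_mult B intro: mult_right_mono bound)
  next
    show "summable (\<lambda>k. B * norm (c k))" by (intro summable_mult sc)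
  qed simp
  have "suminf (\<lambda>k. a k n) = (\<Sum>k\<in>A n. w k n * c k)" for n
    unfolding a_def by (rule sums_unique[symmetric], rule sums_If_finite_set, rule fin)
  moreover have "suminf (\<lambda>k. L * c k) = L * suminf c"
    by (rule suminf_mult) (rule summable_norm_cancel[OF sc])
  ultimately show ?thesis using T by simp
qed

lemma jtp_nat:
  assumes q: "norm q < 1" "q \<noteq> 0" and x: "x \<noteq> 0"
  shows "qpoch_inf (-q/x) q * qpoch_inf (-x) q * qpoch_inf q q
          = (\<Sum>l. q^tri l * x^l) + (\<Sum>l. q^tri(l+2) * (1/x)^Suc l)"
    and "summable (\<lambda>l. norm (q^tri l * x^l))"
    and "summable (\<lambda>l. norm (q^tri(l+2) * (1/x)^Suc l))"
proof -
  define t where "t = norm q"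
  have t: "0 \<le> t" "t < 1" using q by (auto simp: t_def)
  show s1: "summable (\<lambda>l. norm (q^tri l * x^l))"
    using summable_theta[OF t norm_ge_zero[of x], of 0] by (simp add: t_def norm_mult norm_power)
  have "summable (\<lambda>l. (1 / norm x) * (t ^ tri (l + 2) * (1 / norm x) ^ l))"
    by (intro summable_mult summable_theta t) simp
  thus s2: "summable (\<lambda>l. norm (q^tri(l+2) * (1/x)^Suc l))"
    by (simp add: t_def norm_mult norm_power norm_divide algebra_simps)
  define Q where "Q = qpoch_inf q q"
  have Qnz: "Q \<noteq> 0" unfolding Q_def by (rule qpinf_qq_nz[OF q(1)])
  define Bd where "Bd = rupp t / (rlow t)^2"
  have bd: "norm (qbin q N k) \<le> Bd" for N k unfolding Bd_def t_def by (rule qbin_bound[OF q(1)])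
  have L1: "(\<lambda>n. \<Sum>l\<in>{..n}. qbin q (2*n) (n+l) * (q^tri l * x^l)) \<longlonglongrightarrow> (1/Q) * (\<Sum>l. q^tri l * x^l)"
    by (rule tannery_app[OF _ bd s1]) (auto simp: Q_def qbin_lim1[OF q(1)] eventually_ge_at_top)
  have L2: "(\<lambda>n. \<Sum>l\<in>{..<n}. qbin q (2*n) (n - Suc l) * (q^tri(l+2) * (1/x)^Suc l)) \<longlonglongrightarrow> (1/Q) * (\<Sum>l. q^tri(l+2) * (1/x)^Suc l)"
    by (rule tannery_app[OF _ bd s2]) (auto simp: Q_def qbin_lim2[OF q(1)] eventually_gt_at_top)
  have L3: "(\<lambda>n. (\<Prod>m<n. 1 - (-q/x) * q^m) * (\<Prod>i<n. 1 - (-x) * q^i)) \<longlonglongrightarrow> qpoch_inf (-q/x) q * qpoch_inf (-x) q"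
    by (intro tendsto_intros qp_tendsto[OF q(1)])
  have "(\<Prod>m<n. 1 - (-q/x) * q^m) * (\<Prod>i<n. 1 - (-x) * q^i) =
     (\<Sum>l\<in>{..n}. qbin q (2*n) (n+l) * (q^tri l * x^l)) + (\<Sum>l\<in>{..<n}. qbin q (2*n) (n - Suc l) * (q^tri(l+2) * (1/x)^Suc l))" for n
    using fin_jtp[OF q x, of n] by (simp add: mult.assoc)
  with L3 have "(\<lambda>n. (\<Sum>l\<in>{..n}. qbin q (2*n) (n+l) * (q^tri l * x^l)) + (\<Sum>l\<in>{..<n}. qbin q (2*n) (n - Suc l) * (q^tri(l+2) * (1/x)^Suc l)))
      \<longlonglongrightarrow> qpoch_inf (-q/x) q * qpoch_inf (-x) q" by simp
  moreover have "(\<lambda>n. (\<Sum>l\<in>{..n}. qbin q (2*n) (n+l) * (q^tri l * x^l)) + (\<Sum>l\<in>{..<n}. qbin q (2*n) (n - Suc l) * (q^tri(l+2) * (1/x)^Suc l)))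
      \<longlonglongrightarrow> (1/Q) * (\<Sum>l. q^tri l * x^l) + (1/Q) * (\<Sum>l. q^tri(l+2) * (1/x)^Suc l)"
    by (intro tendsto_intros L1 L2)
  ultimately have "qpoch_inf (-q/x) q * qpoch_inf (-x) q = (1/Q) * (\<Sum>l. q^tri l * x^l) + (1/Q) * (\<Sum>l. q^tri(l+2) * (1/x)^Suc l)"
    by (rule LIMSEQ_unique)
  thus "qpoch_inf (-q/x) q * qpoch_inf (-x) q * qpoch_inf q q
          = (\<Sum>l. q^tri l * x^l) + (\<Sum>l. q^tri(l+2) * (1/x)^Suc l)"
    using Qnz unfolding Q_def by (simp add: field_simps)
qed

definition jt :: "complex \<Rightarrow> complex \<Rightarrow> int \<Rightarrow> complex" where
  "jt q x n = q powi (n*(n-1) div 2) * x powi n"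

lemma evdiv: "(n::int)*(n-1) div 2 * 2 = n*(n-1)"
proof -
  have "even (n*(n-1))" by simp
  thus ?thesis by simp
qed

lemma tri_int: "2 * int (tri l) = int l * (int l - 1)"
  by (induction l) (simp_all add: algebra_simps)

lemma jt_nat: "jt q x (int l) = q^tri l * x^l"
proof -
  have "int l * (int l - 1) = 2 * int (tri l)" using tri_int[of l] by simp
  hence "int l * (int l - 1) div 2 = int (tri l)" by simp
  thus ?thesis by (simp add: jt_def)
qed

lemma jt_neg: "jt q x (-int l - 1) = q^tri(l+2) * (1/x)^Suc l"
proof -
  have "2 * int (tri (l+2)) = int (l+2) * (int (l+2) - 1)" by (rule tri_int)
  hence "(-int l - 1) * (-int l - 1 - 1) = 2 * int (tri (l+2))" by (simp add: algebra_simps)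
  hence e: "(-int l - 1) * (-int l - 1 - 1) div 2 = int (tri (l+2))" by simp
  have "x powi (-int l - 1) = (1/x)^Suc l"
  proof -
    have "-int l - 1 = - int (Suc l)" by simp
    hence "x powi (-int l - 1) = inverse (x ^ Suc l)" 
      by (metis power_int_minus power_int_of_nat)
    thus ?thesis by (simp add: power_one_over inverse_mult_distrib divide_inverse power_inverse)
  qed
  thus ?thesis unfolding jt_def e power_int_of_nat by simp
qed

lemma jtp_int:
  assumes q: "norm q < 1" "q \<noteq> 0" and x: "x \<noteq> 0"
  shows "(jt q x has_sum (qpoch_inf (-q/x) q * qpoch_inf (-x) q * qpoch_inf q q)) UNIV"
proof -
  note J = jtp_nat[OF q x]
  have A: "(jt q x has_sum (\<Sum>l. q^tri l * x^l)) (range int)"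
  proof -
    have "((\<lambda>l. q^tri l * x^l) has_sum (\<Sum>l. q^tri l * x^l)) UNIV"
      by (rule norm_summable_imp_has_sum[OF J(2)]) (rule summable_sums[OF summable_norm_cancel[OF J(2)]])
    hence "((jt q x \<circ> int) has_sum (\<Sum>l. q^tri l * x^l)) UNIV" by (simp add: o_def jt_nat)
    thus ?thesis by (subst has_sum_reindex) auto
  qed
  have B: "(jt q x has_sum (\<Sum>l. q^tri(l+2) * (1/x)^Suc l)) (range (\<lambda>l. -int l - 1))"
  proof -
    have "((\<lambda>l. q^tri(l+2) * (1/x)^Suc l) has_sum (\<Sum>l. q^tri(l+2) * (1/x)^Suc l)) UNIV"
      by (rule norm_summable_imp_has_sum[OF J(3)]) (rule summable_sums[OF summable_norm_cancel[OF J(3)]])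
    hence "((jt q x \<circ> (\<lambda>l. -int l - 1)) has_sum (\<Sum>l. q^tri(l+2) * (1/x)^Suc l)) UNIV"
      by (simp add: o_def jt_neg)
    thus ?thesis by (subst has_sum_reindex) (auto simp: inj_on_def)
  qed
  have "(jt q x has_sum ((\<Sum>l. q^tri l * x^l) + (\<Sum>l. q^tri(l+2) * (1/x)^Suc l))) (range int \<union> range (\<lambda>l. -int l - 1))"
    by (rule has_sum_Un_disjoint[OF A B]) auto
  moreover have "range int \<union> range (\<lambda>l. -int l - 1) = UNIV"
  proof -
    have "n \<in> range int \<union> range (\<lambda>l. -int l - 1)" for n :: int
    proof (cases "n \<ge> 0")
      case True thus ?thesis by (metis UnI1 nonneg_int_cases rangeI)
    next
      case False
      hence "n = -int (nat (-n-1)) - 1" by simp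
      thus ?thesis by (metis UnI2 rangeI)
    qed
    thus ?thesis by auto
  qed
  ultimately show ?thesis using J(1) by simp
qed

lemma has_sum_classes5:
  fixes f :: "int \<Rightarrow> complex"
  assumes "((\<lambda>m. f (5*m - 2)) has_sum a) UNIV" "((\<lambda>m. f (5*m - 1)) has_sum b) UNIV"
    "((\<lambda>m. f (5*m)) has_sum c) UNIV" "((\<lambda>m. f (5*m + 1)) has_sum d) UNIV"
    "((\<lambda>m. f (5*m + 2)) has_sum e) UNIV"
  shows "(f has_sum (a + b + c + d + e)) UNIV"
proof -
  have R: "((\<lambda>m. f (5*m + r)) has_sum s) UNIV \<Longrightarrow> (f has_sum s) (range (\<lambda>m. 5*m + r))" for r s
    by (subst has_sum_reindex) (auto simp: inj_on_def o_def)
  have 1: "(f has_sum a) (range (\<lambda>m. 5*m + (-2)))" using R[of "-2"] assms(1) by simp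
  have 2: "(f has_sum b) (range (\<lambda>m. 5*m + (-1)))" using R[of "-1"] assms(2) by simp
  have 3: "(f has_sum c) (range (\<lambda>m. 5*m + 0))" using R[of "0"] assms(3) by simp
  have 4: "(f has_sum d) (range (\<lambda>m. 5*m + 1))" using R[of "1"] assms(4) by simp
  have 5: "(f has_sum e) (range (\<lambda>m. 5*m + 2))" using R[of "2"] assms(5) by simp
  have "(f has_sum (a + b)) (range (\<lambda>m. 5*m + (-2)) \<union> range (\<lambda>m. 5*m + (-1)))"
    by (rule has_sum_Un_disjoint[OF 1 2]) (auto, presburger)
  hence "(f has_sum (a + b + c)) ((range (\<lambda>m. 5*m + (-2)) \<union> range (\<lambda>m. 5*m + (-1))) \<union> range (\<lambda>m. 5*m + 0))"
    by (rule has_sum_Un_disjoint[OF _ 3]) (auto, presburger+)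
  hence "(f has_sum (a + b + c + d)) (((range (\<lambda>m. 5*m + (-2)) \<union> range (\<lambda>m. 5*m + (-1))) \<union> range (\<lambda>m. 5*m + 0)) \<union> range (\<lambda>m. 5*m + 1))"
    by (rule has_sum_Un_disjoint[OF _ 4]) (auto, presburger+)
  hence "(f has_sum (a + b + c + d + e)) ((((range (\<lambda>m. 5*m + (-2)) \<union> range (\<lambda>m. 5*m + (-1))) \<union> range (\<lambda>m. 5*m + 0)) \<union> range (\<lambda>m. 5*m + 1)) \<union> range (\<lambda>m. 5*m + 2))"
    by (rule has_sum_Un_disjoint[OF _ 5]) (auto, presburger+)
  moreover have "(((range (\<lambda>m. 5*m + (-2)) \<union> range (\<lambda>m. 5*m + (-1))) \<union> range (\<lambda>m. 5*m + 0)) \<union> range (\<lambda>m. 5*m + 1)) \<union> range (\<lambda>m. 5*m + 2) = (UNIV :: int set)"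
  proof -
    have "n \<in> (((range (\<lambda>m. 5*m + (-2)) \<union> range (\<lambda>m. 5*m + (-1))) \<union> range (\<lambda>m. 5*m + 0)) \<union> range (\<lambda>m. 5*m + 1)) \<union> range (\<lambda>m. 5*m + 2)" for n :: int
    proof -
      define r where "r = (n+2) mod 5 - 2"
      define k where "k = (n+2) div 5"
      have n: "n = 5*k + r" using div_mult_mod_eq[of "n+2" 5] unfolding r_def k_def by linarith
      have "r = -2 \<or> r = -1 \<or> r = 0 \<or> r = 1 \<or> r = 2" unfolding r_def by auto
      thus ?thesis using n by (elim disjE) (auto simp: image_iff intro!: exI[of _ k])
    qed
    thus ?thesis by auto
  qed
  ultimately show ?thesis by simp
qed

lemma m1_5: "(-1::complex) powi (5*m + r) = (-1) powi m * (-1) powi r"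
proof -
  have "(-1::complex) powi (5*m + r) = ((-1) powi 5) powi m * (-1) powi r"
    by (simp add: power_int_add power_int_mult)
  thus ?thesis by simp
qed

lemma z5: assumes "(z::complex)^5 = 1" shows "z powi (5*m + r) = z powi r"
proof -
  have "z \<noteq> 0" using assms by auto
  hence "z powi (5*m + r) = (z powi 5) powi m * z powi r"
    by (simp add: power_int_add power_int_mult)
  thus ?thesis using assms by simp
qed

lemma neg_powi: "(- ((w::complex)^k)) powi n = (-1) powi n * (w^k) powi n"
  by (metis mult_minus1 power_int_mult_distrib)

lemma powi_eq2: "(q::complex) \<noteq> 0 \<Longrightarrow> A = int c + B + C \<Longrightarrow> q powi A = q^c * (q powi B * q powi C)"
  by (simp add: power_int_add)

lemma powi_eq3: "(q::complex) \<noteq> 0 \<Longrightarrow> A + N = int c + B + C \<Longrightarrow> q powi A * q powi N = q^c * (q powi B * q powi C)"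
proof -
  assume q: "q \<noteq> 0" and h: "A + N = int c + B + C"
  have "q powi A * q powi N = q powi (A + N)" using power_int_add[of q A N] q by simp
  also have "\<dots> = q powi (int c + (B + C))" using h by (simp add: add.assoc)
  also have "\<dots> = q^c * (q powi B * q powi C)" using q by (simp add: power_int_add)
  finally show ?thesis .
qed

lemma pow_div: "(q::complex) \<noteq> 0 \<Longrightarrow> b \<le> a \<Longrightarrow> q^a / q^b = q^(a-b)"
  by (simp add: power_diff)

lemma norm_pow_lt1: "norm (q::complex) < 1 \<Longrightarrow> k > 0 \<Longrightarrow> norm (q^k) < 1"
  by (simp add: norm_power power_less_one_iff)

lemma jtp_pow:
  assumes "norm q < 1" "q \<noteq> 0" "x \<noteq> 0" "k > 0"
  shows "(jt (q^k) x has_sum (qpoch_inf (-(q^k)/x) (q^k) * qpoch_inf (-x) (q^k) * qpoch_inf (q^k) (q^k))) UNIV"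
  by (rule jtp_int) (use assms norm_pow_lt1 in auto)

lemma cls:
  assumes "(jt (q^k) x has_sum S) UNIV" "\<And>m. f (5*m + r) = c * jt (q^k) x m"
  shows "((\<lambda>m. f (5*m + r)) has_sum (c * S)) UNIV"
  unfolding assms(2) by (rule has_sum_cmult_right[OF assms(1)])

context
  fixes q :: complex
  assumes q: "norm q < 1" "q \<noteq> 0"
begin

lemma psi_m1: "jt q q (5*m - 1) = jt (q^25) (q^10) m"
proof -
  have e: "q powi ((5*m-1)*(5*m-1-1) div 2) * q powi (5*m-1) = q^0 * (q powi (int 25 * (m*(m-1) div 2)) * q powi (int 10 * m))"
    by (rule powi_eq3[OF q(2)]) (simp only: of_nat_numeral of_nat_0; use evdiv[of "5*m-1"] evdiv[of m] in algebra)
  show ?thesis unfolding jt_def power_int_power e by simp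
qed

lemma psi_0: "jt q q (5*m) = jt (q^25) (q^15) m"
proof -
  have e: "q powi ((5*m)*(5*m-1) div 2) * q powi (5*m) = q^0 * (q powi (int 25 * (m*(m-1) div 2)) * q powi (int 15 * m))"
    by (rule powi_eq3[OF q(2)]) (simp only: of_nat_numeral of_nat_0; use evdiv[of "5*m"] evdiv[of m] in algebra)
  show ?thesis unfolding jt_def power_int_power e by simp
qed

lemma psi_1: "jt q q (5*m + 1) = q * jt (q^25) (q^20) m"
proof -
  have e: "q powi ((5*m+1)*(5*m+1-1) div 2) * q powi (5*m+1) = q^1 * (q powi (int 25 * (m*(m-1) div 2)) * q powi (int 20 * m))"
    by (rule powi_eq3[OF q(2)]) (simp only: of_nat_numeral of_nat_1; use evdiv[of "5*m+1"] evdiv[of m] in algebra)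
  show ?thesis unfolding jt_def power_int_power e by simp
qed

lemma psi_m2: "jt q q (5*m - 2) = q * jt (q^25) (q^5) m"
proof -
  have e: "q powi ((5*m-2)*(5*m-2-1) div 2) * q powi (5*m-2) = q^1 * (q powi (int 25 * (m*(m-1) div 2)) * q powi (int 5 * m))"
    by (rule powi_eq3[OF q(2)]) (simp only: of_nat_numeral of_nat_1; use evdiv[of "5*m-2"] evdiv[of m] in algebra)
  show ?thesis unfolding jt_def power_int_power e by simp
qed

lemma psi_2: "jt q q (5*m + 2) = q^3 * jt (q^25) (q^25) m"
proof -
  have e: "q powi ((5*m+2)*(5*m+2-1) div 2) * q powi (5*m+2) = q^3 * (q powi (int 25 * (m*(m-1) div 2)) * q powi (int 25 * m))"
    by (rule powi_eq3[OF q(2)]) (simp only: of_nat_numeral; use evdiv[of "5*m+2"] evdiv[of m] in algebra)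
  show ?thesis unfolding jt_def power_int_power e by simp
qed

end

context
  fixes q \<zeta> :: complex
  assumes q: "norm q < 1" "q \<noteq> 0" and z: "\<zeta>^5 = 1"
begin

lemma zpw: "(\<zeta>^2) powi (5*m + r) = \<zeta> powi (2*r)"
proof -
  have "(\<zeta>^2) powi (5*m + r) = \<zeta> powi (5*(2*m) + 2*r)" by (simp add: power_int_power algebra_simps)
  also have "\<dots> = \<zeta> powi (2*r)" by (rule z5[OF z])
  finally show ?thesis .
qed

lemma znz: "\<zeta> \<noteq> 0" using z by auto

lemma th_0: "jt (q^2) (- (\<zeta>^2)) (5*m) = jt (q^50) (- (q^20)) m"
proof -
  have s: "(-1::complex) powi (5*m) = (-1) powi m" using m1_5[of m 0] by simp
  have zz: "(\<zeta>^2) powi (5*m) = 1" using zpw[of m 0] by simp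
  have e: "q powi (int 2 * ((5*m)*(5*m-1) div 2)) = q^0 * (q powi (int 50 * (m*(m-1) div 2)) * q powi (int 20 * m))"
    by (rule powi_eq2[OF q(2)]) (simp only: of_nat_numeral of_nat_0; use evdiv[of "5*m"] evdiv[of m] in algebra)
  show ?thesis unfolding jt_def neg_powi s zz unfolding power_int_power e by (simp add: algebra_simps)
qed

lemma th_1: "jt (q^2) (- (\<zeta>^2)) (5*m + 1) = - (\<zeta>^2) * jt (q^50) (- (q^30)) m"
proof -
  have s: "(-1::complex) powi (5*m + 1) = - ((-1) powi m)" using m1_5[of m 1] by simp
  have zz: "(\<zeta>^2) powi (5*m + 1) = \<zeta>^2" using zpw[of m 1] by simp
  have e: "q powi (int 2 * ((5*m+1)*(5*m+1-1) div 2)) = q^0 * (q powi (int 50 * (m*(m-1) div 2)) * q powi (int 30 * m))"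
    by (rule powi_eq2[OF q(2)]) (simp only: of_nat_numeral of_nat_0; use evdiv[of "5*m+1"] evdiv[of m] in algebra)
  show ?thesis unfolding jt_def neg_powi s zz unfolding power_int_power e by (simp add: algebra_simps)
qed

lemma th_2: "jt (q^2) (- (\<zeta>^2)) (5*m + 2) = \<zeta>^4 * q^2 * jt (q^50) (- (q^40)) m"
proof -
  have s: "(-1::complex) powi (5*m + 2) = (-1) powi m" using m1_5[of m 2] by simp
  have zz: "(\<zeta>^2) powi (5*m + 2) = \<zeta>^4" using zpw[of m 2] by simp
  have e: "q powi (int 2 * ((5*m+2)*(5*m+2-1) div 2)) = q^2 * (q powi (int 50 * (m*(m-1) div 2)) * q powi (int 40 * m))"
    by (rule powi_eq2[OF q(2)]) (simp only: of_nat_numeral; use evdiv[of "5*m+2"] evdiv[of m] in algebra)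
  show ?thesis unfolding jt_def neg_powi s zz unfolding power_int_power e by (simp add: algebra_simps)
qed

lemma th_m1: "jt (q^2) (- (\<zeta>^2)) (5*m - 1) = - (\<zeta>^3) * q^2 * jt (q^50) (- (q^10)) m"
proof -
  have s: "(-1::complex) powi (5*m - 1) = - ((-1) powi m)" using m1_5[of m "-1"] by simp
  have "\<zeta> powi (-2) = \<zeta>^3"
  proof -
    have "\<zeta>^2 * \<zeta>^3 = 1" using z by (simp flip: power_add)
    hence "inverse (\<zeta>^2) = \<zeta>^3" by (rule inverse_unique)
    thus ?thesis by (simp add: power_int_minus)
  qed
  hence zz: "(\<zeta>^2) powi (5*m - 1) = \<zeta>^3" using zpw[of m "-1"] by simp
  have e: "q powi (int 2 * ((5*m-1)*(5*m-1-1) div 2)) = q^2 * (q powi (int 50 * (m*(m-1) div 2)) * q powi (int 10 * m))"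
    by (rule powi_eq2[OF q(2)]) (simp only: of_nat_numeral; use evdiv[of "5*m-1"] evdiv[of m] in algebra)
  show ?thesis unfolding jt_def neg_powi s zz unfolding power_int_power e by (simp add: algebra_simps)
qed

lemma th_m2: "jt (q^2) (- (\<zeta>^2)) (5*m - 2) = \<zeta> * q^6 * jt (q^50) (-1) m"
proof -
  have s: "(-1::complex) powi (5*m - 2) = (-1) powi m" using m1_5[of m "-2"] by simp
  have "\<zeta> powi (-4) = \<zeta>"
  proof -
    have "\<zeta>^4 * \<zeta> = 1" using z by (simp flip: power_Suc2)
    hence "inverse (\<zeta>^4) = \<zeta>" by (rule inverse_unique)
    thus ?thesis by (simp add: power_int_minus)
  qed
  hence zz: "(\<zeta>^2) powi (5*m - 2) = \<zeta>" using zpw[of m "-2"] by simp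
  have e: "q powi (int 2 * ((5*m-2)*(5*m-2-1) div 2)) = q^6 * (q powi (int 50 * (m*(m-1) div 2)) * q powi 0)"
    by (rule powi_eq2[OF q(2)]) (simp only: of_nat_numeral; use evdiv[of "5*m-2"] evdiv[of m] in algebra)
  show ?thesis unfolding jt_def neg_powi s zz unfolding power_int_power e by (simp add: algebra_simps)
qed

end

lemma psi_dissect:
  assumes q: "norm q < 1" "q \<noteq> 0"
  shows "qpoch_inf (-1) q * qpoch_inf (-q) q * qpoch_inf q q =
     q * (qpoch_inf (-(q^20)) (q^25) * qpoch_inf (-(q^5)) (q^25) * qpoch_inf (q^25) (q^25))
   + qpoch_inf (-(q^15)) (q^25) * qpoch_inf (-(q^10)) (q^25) * qpoch_inf (q^25) (q^25)
   + qpoch_inf (-(q^10)) (q^25) * qpoch_inf (-(q^15)) (q^25) * qpoch_inf (q^25) (q^25)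
   + q * (qpoch_inf (-(q^5)) (q^25) * qpoch_inf (-(q^20)) (q^25) * qpoch_inf (q^25) (q^25))
   + q^3 * (qpoch_inf (-1) (q^25) * qpoch_inf (-(q^25)) (q^25) * qpoch_inf (q^25) (q^25))"
proof -
  have T: "(jt q q has_sum (qpoch_inf (-1) q * qpoch_inf (-q) q * qpoch_inf q q)) UNIV"
    using jtp_int[OF q q(2)] q(2) by simp
  have d: "q^25 / q^5 = q^20" "q^25 / q^10 = q^15" "q^25 / q^15 = q^10" "q^25 / q^20 = q^5"
    using q(2) by (simp_all add: pow_div)
  have J: "\<And>e. e \<le> 25 \<Longrightarrow> (jt (q^25) (q^e) has_sum (qpoch_inf (-(q^25)/(q^e)) (q^25) * qpoch_inf (-(q^e)) (q^25) * qpoch_inf (q^25) (q^25))) UNIV"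
    by (rule jtp_pow) (use q in auto)
  have 1: "((\<lambda>m. jt q q (5*m - 2)) has_sum q * (qpoch_inf (-(q^20)) (q^25) * qpoch_inf (-(q^5)) (q^25) * qpoch_inf (q^25) (q^25))) UNIV"
    unfolding psi_m2[OF q] by (rule has_sum_cmult_right) (use J[of 5] d in simp)
  have 2: "((\<lambda>m. jt q q (5*m - 1)) has_sum (qpoch_inf (-(q^15)) (q^25) * qpoch_inf (-(q^10)) (q^25) * qpoch_inf (q^25) (q^25))) UNIV"
    unfolding psi_m1[OF q] using J[of 10] d by simp
  have 3: "((\<lambda>m. jt q q (5*m)) has_sum (qpoch_inf (-(q^10)) (q^25) * qpoch_inf (-(q^15)) (q^25) * qpoch_inf (q^25) (q^25))) UNIV"
    unfolding psi_0[OF q] using J[of 15] d by simp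
  have 4: "((\<lambda>m. jt q q (5*m + 1)) has_sum q * (qpoch_inf (-(q^5)) (q^25) * qpoch_inf (-(q^20)) (q^25) * qpoch_inf (q^25) (q^25))) UNIV"
    unfolding psi_1[OF q] by (rule has_sum_cmult_right) (use J[of 20] d in simp)
  have 5: "((\<lambda>m. jt q q (5*m + 2)) has_sum q^3 * (qpoch_inf (-1) (q^25) * qpoch_inf (-(q^25)) (q^25) * qpoch_inf (q^25) (q^25))) UNIV"
    unfolding psi_2[OF q] by (rule has_sum_cmult_right) (use J[of 25] q(2) in simp)
  from has_sum_classes5[OF 1 2 3 4 5] T show ?thesis using has_sum_unique by blast
qed

lemma qp_one: "norm Q < 1 \<Longrightarrow> qpoch_inf 1 Q = 0"
  using qp_shift[of Q 1] by simp

lemma theta_dissect: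
  assumes q: "norm q < 1" "q \<noteq> 0" and z: "\<zeta>^5 = 1"
  shows "qpoch_inf (-(q^2)/(-(\<zeta>^2))) (q^2) * qpoch_inf (\<zeta>^2) (q^2) * qpoch_inf (q^2) (q^2) =
     (qpoch_inf (q^30) (q^50) * qpoch_inf (q^20) (q^50) * qpoch_inf (q^50) (q^50))
   - \<zeta>^2 * (qpoch_inf (q^20) (q^50) * qpoch_inf (q^30) (q^50) * qpoch_inf (q^50) (q^50))
   + \<zeta>^4 * q^2 * (qpoch_inf (q^10) (q^50) * qpoch_inf (q^40) (q^50) * qpoch_inf (q^50) (q^50))
   - \<zeta>^3 * q^2 * (qpoch_inf (q^40) (q^50) * qpoch_inf (q^10) (q^50) * qpoch_inf (q^50) (q^50))"
proof -
  have znz: "\<zeta> \<noteq> 0" using z by auto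
  have T: "(jt (q^2) (-(\<zeta>^2)) has_sum (qpoch_inf (-(q^2)/(-(\<zeta>^2))) (q^2) * qpoch_inf (\<zeta>^2) (q^2) * qpoch_inf (q^2) (q^2))) UNIV"
    using jtp_pow[OF q, of "-(\<zeta>^2)" 2] znz by simp
  have d: "q^50 / q^10 = q^40" "q^50 / q^20 = q^30" "q^50 / q^30 = q^20" "q^50 / q^40 = q^10"
    using q(2) by (simp_all add: pow_div)
  have J: "(jt (q^50) (-(q^e)) has_sum (qpoch_inf (-(q^50)/(-(q^e))) (q^50) * qpoch_inf (q^e) (q^50) * qpoch_inf (q^50) (q^50))) UNIV" for e
    using jtp_pow[OF q, of "-(q^e)" 50] q(2) by simp
  have Q50: "norm (q^50) < 1" by (rule norm_pow_lt1[OF q(1)]) simp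
  have 1: "((\<lambda>m. jt (q^2) (-(\<zeta>^2)) (5*m - 2)) has_sum 0) UNIV"
  proof -
    have "(jt (q^50) (-1) has_sum (qpoch_inf (-(q^50)/(-1)) (q^50) * qpoch_inf 1 (q^50) * qpoch_inf (q^50) (q^50))) UNIV"
      using jtp_pow[OF q, of "-1" 50] by simp
    hence "(jt (q^50) (-1) has_sum 0) UNIV" using qp_one[OF Q50] by simp
    from has_sum_cmult_right[OF this, of "\<zeta> * q^6"] show ?thesis unfolding th_m2[OF q z] by simp
  qed
  have 2: "((\<lambda>m. jt (q^2) (-(\<zeta>^2)) (5*m - 1)) has_sum (- (\<zeta>^3) * q^2) * (qpoch_inf (q^40) (q^50) * qpoch_inf (q^10) (q^50) * qpoch_inf (q^50) (q^50))) UNIV"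
    unfolding th_m1[OF q z] by (rule has_sum_cmult_right) (use J[of 10] d in simp)
  have 3: "((\<lambda>m. jt (q^2) (-(\<zeta>^2)) (5*m)) has_sum (qpoch_inf (q^30) (q^50) * qpoch_inf (q^20) (q^50) * qpoch_inf (q^50) (q^50))) UNIV"
    unfolding th_0[OF q z] using J[of 20] d by simp
  have 4: "((\<lambda>m. jt (q^2) (-(\<zeta>^2)) (5*m + 1)) has_sum (- (\<zeta>^2)) * (qpoch_inf (q^20) (q^50) * qpoch_inf (q^30) (q^50) * qpoch_inf (q^50) (q^50))) UNIV"
    unfolding th_1[OF q z] by (rule has_sum_cmult_right) (use J[of 30] d in simp)
  have 5: "((\<lambda>m. jt (q^2) (-(\<zeta>^2)) (5*m + 2)) has_sum (\<zeta>^4 * q^2) * (qpoch_inf (q^10) (q^50) * qpoch_inf (q^40) (q^50) * qpoch_inf (q^50) (q^50))) UNIV"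
    unfolding th_2[OF q z] by (rule has_sum_cmult_right) (use J[of 40] d in simp)
  from has_sum_classes5[OF 1 2 3 4 5] T have "qpoch_inf (-(q^2)/(-(\<zeta>^2))) (q^2) * qpoch_inf (\<zeta>^2) (q^2) * qpoch_inf (q^2) (q^2) =
     0 + (- (\<zeta>^3) * q^2) * (qpoch_inf (q^40) (q^50) * qpoch_inf (q^10) (q^50) * qpoch_inf (q^50) (q^50))
     + (qpoch_inf (q^30) (q^50) * qpoch_inf (q^20) (q^50) * qpoch_inf (q^50) (q^50))
     + (- (\<zeta>^2)) * (qpoch_inf (q^20) (q^50) * qpoch_inf (q^30) (q^50) * qpoch_inf (q^50) (q^50))
     + (\<zeta>^4 * q^2) * (qpoch_inf (q^10) (q^50) * qpoch_inf (q^40) (q^50) * qpoch_inf (q^50) (q^50))"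
    using has_sum_unique by blast
  thus ?thesis by (simp add: algebra_simps)
qed

lemma final_alg:
  fixes q z P22 Pq2 Zp Zm Z2 Z3 P1010 N11 P11 M1 Zs N20 N5 P25 N15 N10 M25 N25
    P30 P20 P50 P10 P40 P10a P15a P5a P20a V :: complex
  assumes rA: "Zp*Zm*Z2*Z3*P22 = P1010"
    and rB: "M1 = 2*N11"
    and rC: "N11*P11 = P22"
    and rD: "P11 = Pq2*P22"
    and rE: "Zs = (1 - z^2)*Z2"
    and rPsi: "M1*N11*P11 = q*(N20*N5*P25) + N15*N10*P25 + N10*N15*P25 + q*(N5*N20*P25) + q^3*(M25*N25*P25)"
    and rTheta: "Z3*Zs*P22 = P30*P20*P50 - z^2*(P20*P30*P50) + z^4*q^2*(P10*P40*P50) - z^3*q^2*(P40*P10*P50)"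
    and rF: "M25 = 2*N25"
    and rG: "P20 = N10*P10a" and rH: "P30 = N15*P15a" and rI: "P10 = N5*P5a" and rJ: "P40 = N20*P20a"
    and rK: "P1010 = P10*P20*P30*P40*P50"
    and rL: "P50 = N25*P25" and rM: "P25 = V*P50"
    and rZ: "(z + z^4)*(1 - z^2) = z^4 - z^3"
    and nz: "P22 \<noteq> 0" "Pq2 \<noteq> 0" "Zp \<noteq> 0" "Zm \<noteq> 0" "P1010 \<noteq> 0" "1 - z^2 \<noteq> 0"
      "P10a \<noteq> 0" "P15a \<noteq> 0" "P5a \<noteq> 0" "P20a \<noteq> 0" "P10 \<noteq> 0" "P20 \<noteq> 0" "P30 \<noteq> 0"
      "P40 \<noteq> 0" "P50 \<noteq> 0" "V \<noteq> 0" "P25 \<noteq> 0"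
  shows "P22 / (Pq2 * Zp * Zm) =
      P25 * (P20 * P30) / ((P10a * P15a) * (P10 * P40))
    + (z + z^4) * q^5 * P50 / (V * (P20 * P30))
    + q * P25 / (P5a * P20a)
    + (z + z^4) * q^2 * P25 / (P10a * P15a)
    + (z + z^4) * q^3 * P25 * (P10 * P40) / ((P5a * P20a) * (P20 * P30))
    + q^3 * P50 / (V * (P10 * P40))"
proof -
  define c where "c = z + z^4"
  define A where "A = N10*N15*P25"
  define B where "B = N5*N20*P25"
  define D where "D = P20*P30*P50"
  define E where "E = P10*P40*P50"
  have s1: "N11*Pq2 = 1"
  proof -
    have "N11*Pq2*P22 = 1*P22" using rC rD by (simp add: mult.assoc)
    thus ?thesis using nz(1) by (metis mult_cancel_right)
  qed
  have s3: "2*N11*P22 = 2*(A + q*B + q^3*(N25*N25*P25))"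
    using rPsi unfolding rB A_def B_def rF using rC[symmetric]
    by (simp add: algebra_simps)
  have s4: "(1-z^2)*(Z2*Z3*P22) = (1-z^2)*(D + c*q^2*E)"
  proof -
    have "(1-z^2)*(Z2*Z3*P22) = Z3*Zs*P22" by (simp add: rE algebra_simps)
    also have "\<dots> = (1 - z^2)*D + (z^4 - z^3)*q^2*E" unfolding rTheta D_def E_def by (simp add: algebra_simps)
    also have "\<dots> = (1-z^2)*(D + c*q^2*E)" unfolding c_def rZ[symmetric] by (simp add: algebra_simps)
    finally show ?thesis .
  qed
  have s4': "Z2*Z3*P22 = D + c*q^2*E" using s4 nz(6) by simp
  have s3': "N11*P22 = A + q*B + q^3*(N25*N25*P25)"
  proof -
    from s3 have "2*(N11*P22) = 2*(A + q*B + q^3*(N25*N25*P25))" by (simp only: mult.assoc)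
    thus ?thesis by (subst (asm) mult_left_cancel) simp_all
  qed
  have "P22 / (Pq2 * Zp * Zm) = (N11*P22) * (Z2*Z3*P22) / P1010"
  proof -
    have i: "1/Pq2 = N11" using s1 nz(2) by (simp add: field_simps)
    have Z: "Z2 \<noteq> 0" "Z3 \<noteq> 0" using rA nz(5) by auto
    have ZZ: "1/(Zp*Zm) = (Z2*Z3*P22) / P1010" using rA[symmetric] Z nz by (simp add: field_simps)
    have "P22 / (Pq2 * Zp * Zm) = P22 * (1/Pq2) * (1/(Zp*Zm))" by simp
    also have "\<dots> = (N11*P22) * (Z2*Z3*P22) / P1010" unfolding i ZZ by simp
    finally show ?thesis .
  qed
  also have "\<dots> = (A + q*B + q^3*(N25*N25*P25)) * (D + c*q^2*E) / P1010" unfolding s3' s4' ..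
  also have "\<dots> = P25 * (P20 * P30) / ((P10a * P15a) * (P10 * P40))
    + (z + z^4) * q^5 * P50 / (V * (P20 * P30))
    + q * P25 / (P5a * P20a)
    + (z + z^4) * q^2 * P25 / (P10a * P15a)
    + (z + z^4) * q^3 * P25 * (P10 * P40) / ((P5a * P20a) * (P20 * P30))
    + q^3 * P50 / (V * (P10 * P40))"
  proof -
    have n: "N10 \<noteq> 0" "N15 \<noteq> 0" "N5 \<noteq> 0" "N20 \<noteq> 0" "N25 \<noteq> 0"
      using nz rG rH rI rJ rL by auto
    have V: "V = 1 / N25"
    proof -
      have "V * N25 * P25 = 1 * P25" using rM rL by (simp add: mult.assoc)
      hence "V * N25 = 1" using nz by simp
      thus ?thesis using n by (simp add: field_simps)
    qed
    show ?thesis unfolding A_def B_def D_def E_def c_def rK V rG rH rI rJ rL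
      using n nz(7-10) nz(17) by (simp add: field_simps) algebra
  qed
  finally show ?thesis .
qed

lemma prod5:
  assumes Q: "norm Q < 1" and z: "\<zeta>^5 = 1" "\<zeta> \<noteq> 1"
  shows "qpoch_inf (\<zeta>*a) Q * qpoch_inf (\<zeta>^4*a) Q * qpoch_inf (\<zeta>^2*a) Q * qpoch_inf (\<zeta>^3*a) Q * qpoch_inf a Q
     = qpoch_inf (a^5) (Q^5)"
proof -
  have s: "1 + \<zeta> + \<zeta>^2 + \<zeta>^3 + \<zeta>^4 = 0"
  proof -
    have "(\<zeta> - 1) * (1 + \<zeta> + \<zeta>^2 + \<zeta>^3 + \<zeta>^4) = \<zeta>^5 - 1" by (simp add: algebra_simps eval_nat_numeral)
    hence "(\<zeta> - 1) * (1 + \<zeta> + \<zeta>^2 + \<zeta>^3 + \<zeta>^4) = 0" using z by simp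
    thus ?thesis using z by simp
  qed
  have pt: "(1 - \<zeta>*y) * (1 - \<zeta>^4*y) * (1 - \<zeta>^2*y) * (1 - \<zeta>^3*y) * (1 - y) = 1 - y^5" for y
    using s z(1) by algebra
  have Q5: "norm (Q^5) < 1" by (rule norm_pow_lt1[OF Q]) simp
  have L1: "(\<lambda>n. (\<Prod>j<n. 1 - (\<zeta>*a)*Q^j) * (\<Prod>j<n. 1 - (\<zeta>^4*a)*Q^j) * (\<Prod>j<n. 1 - (\<zeta>^2*a)*Q^j)
      * (\<Prod>j<n. 1 - (\<zeta>^3*a)*Q^j) * (\<Prod>j<n. 1 - a*Q^j)) \<longlonglongrightarrow>
     qpoch_inf (\<zeta>*a) Q * qpoch_inf (\<zeta>^4*a) Q * qpoch_inf (\<zeta>^2*a) Q * qpoch_inf (\<zeta>^3*a) Q * qpoch_inf a Q"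
    by (intro tendsto_intros qp_tendsto[OF Q])
  have "(\<Prod>j<n. 1 - (\<zeta>*a)*Q^j) * (\<Prod>j<n. 1 - (\<zeta>^4*a)*Q^j) * (\<Prod>j<n. 1 - (\<zeta>^2*a)*Q^j)
      * (\<Prod>j<n. 1 - (\<zeta>^3*a)*Q^j) * (\<Prod>j<n. 1 - a*Q^j) = (\<Prod>j<n. 1 - a^5 * (Q^5)^j)" for n
  proof -
    have "(\<Prod>j<n. 1 - (\<zeta>*a)*Q^j) * (\<Prod>j<n. 1 - (\<zeta>^4*a)*Q^j) * (\<Prod>j<n. 1 - (\<zeta>^2*a)*Q^j)
      * (\<Prod>j<n. 1 - (\<zeta>^3*a)*Q^j) * (\<Prod>j<n. 1 - a*Q^j) =
      (\<Prod>j<n. (1 - \<zeta>*(a*Q^j)) * (1 - \<zeta>^4*(a*Q^j)) * (1 - \<zeta>^2*(a*Q^j)) * (1 - \<zeta>^3*(a*Q^j)) * (1 - (a*Q^j)))"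
      by (simp add: prod.distrib mult.assoc)
    also have "\<dots> = (\<Prod>j<n. 1 - (a*Q^j)^5)" by (simp only: pt)
    also have "\<dots> = (\<Prod>j<n. 1 - a^5 * (Q^5)^j)" by (simp add: power_mult_distrib flip: power_mult) (simp add: mult.commute)
    finally show ?thesis .
  qed
  with L1 have "(\<lambda>n. \<Prod>j<n. 1 - a^5 * (Q^5)^j) \<longlonglongrightarrow> qpoch_inf (\<zeta>*a) Q * qpoch_inf (\<zeta>^4*a) Q * qpoch_inf (\<zeta>^2*a) Q * qpoch_inf (\<zeta>^3*a) Q * qpoch_inf a Q"
    by simp
  moreover have "(\<lambda>n. \<Prod>j<n. 1 - a^5 * (Q^5)^j) \<longlonglongrightarrow> qpoch_inf (a^5) (Q^5)" by (rule qp_tendsto[OF Q5])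
  ultimately show ?thesis using LIMSEQ_unique by blast
qed

lemma qp_nz_pow: "norm q < 1 \<Longrightarrow> q \<noteq> 0 \<Longrightarrow> 0 < a \<Longrightarrow> 0 < b \<Longrightarrow> qpoch_inf (q^a) (q^b) \<noteq> 0"
  by (rule qp_nonzero) (auto intro: norm_pow_lt1)

lemma qp_nz_npow: "norm q < 1 \<Longrightarrow> q \<noteq> 0 \<Longrightarrow> 0 < a \<Longrightarrow> 0 < b \<Longrightarrow> qpoch_inf (-(q^a)) (q^b) \<noteq> 0"
  by (rule qp_nonzero) (auto intro: norm_pow_lt1 simp del: norm_power simp add: norm_minus_cancel)

theorem main_nz:
  fixes q \<zeta> :: complex
  assumes "norm q < 1" and q0: "q \<noteq> 0"
    and "\<zeta> ^ 5 = 1" and "\<zeta> \<noteq> 1"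
  shows "qpoch_inf (q^2) (q^2) /
           (qpoch_inf q (q^2) * qpoch_inf (\<zeta> * q^2) (q^2) * qpoch_inf (inverse \<zeta> * q^2) (q^2))
       = qpoch_inf (q^25) (q^25) * qtheta_inf (q^20) (q^50)
           / (qtheta_inf (q^10) (q^25) * qtheta_inf (q^10) (q^50))
         + (\<zeta> + \<zeta>^4) * q^5 * qpoch_inf (q^50) (q^50)
           / (qpoch_inf (q^25) (q^50) * qtheta_inf (q^20) (q^50))
         + q * qpoch_inf (q^25) (q^25) / qtheta_inf (q^5) (q^25)
         + (\<zeta> + \<zeta>^4) * q^2 * qpoch_inf (q^25) (q^25) / qtheta_inf (q^10) (q^25)
         + (\<zeta> + \<zeta>^4) * q^3 * qpoch_inf (q^25) (q^25) * qtheta_inf (q^10) (q^50)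
           / (qtheta_inf (q^5) (q^25) * qtheta_inf (q^20) (q^50))
         + q^3 * qpoch_inf (q^50) (q^50)
           / (qpoch_inf (q^25) (q^50) * qtheta_inf (q^10) (q^50))"
proof -
  note q = assms(1) q0
  note z = assms(3,4)
  have znz: "\<zeta> \<noteq> 0" using z by auto
  have inv: "inverse \<zeta> = \<zeta>^4"
  proof -
    have "\<zeta> * \<zeta>^4 = 1" using z by (simp flip: power_Suc)
    thus ?thesis by (rule inverse_unique)
  qed
  have nz1: "norm \<zeta> = 1"
  proof -
    have "norm \<zeta> ^ 5 = 1" using z by (metis norm_one norm_power)
    thus ?thesis using power_eq_imp_eq_base[of "norm \<zeta>" 5 1] by simp
  qed
  have z2: "1 - \<zeta>^2 \<noteq> 0"
  proof
    assume "1 - \<zeta>^2 = 0"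
    hence "\<zeta>^2 = 1" by simp
    moreover have "\<zeta>^5 = \<zeta> * (\<zeta>^2)^2" by algebra
    ultimately have "\<zeta>^5 = \<zeta>" by simp
    thus False using z by simp
  qed
  have rA: "qpoch_inf (\<zeta>*q^2) (q^2) * qpoch_inf (inverse \<zeta>*q^2) (q^2) * qpoch_inf (\<zeta>^2*q^2) (q^2) * qpoch_inf (\<zeta>^3*q^2) (q^2)
       * qpoch_inf (q^2) (q^2) = qpoch_inf (q^10) (q^10)"
    using prod5[OF norm_pow_lt1[OF q(1)] z, of 2 "q^2"] unfolding inv by (simp flip: power_mult)
  have rB: "qpoch_inf (-1) q = 2 * qpoch_inf (-q) q" using qp_shift[OF q(1), of "-1"] by simp
  have rC: "qpoch_inf (-q) q * qpoch_inf q q = qpoch_inf (q^2) (q^2)" by (rule qp_sq[OF q(1)])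
  have rD: "qpoch_inf q q = qpoch_inf q (q^2) * qpoch_inf (q^2) (q^2)"
    using qp_split2[OF q(1), of q] by (simp add: power2_eq_square)
  have rE: "qpoch_inf (\<zeta>^2) (q^2) = (1 - \<zeta>^2) * qpoch_inf (\<zeta>^2 * q^2) (q^2)"
    by (rule qp_shift[OF norm_pow_lt1[OF q(1)]]) simp
  note rPsi = psi_dissect[OF q]
  have t1: "-(q^2)/(-(\<zeta>^2)) = \<zeta>^3 * q^2"
  proof -
    have "\<zeta>^3 * \<zeta>^2 = 1" using z by (simp flip: power_add)
    thus ?thesis using znz by (simp add: field_simps)
  qed
  have rTheta: "qpoch_inf (\<zeta>^3 * q^2) (q^2) * qpoch_inf (\<zeta>^2) (q^2) * qpoch_inf (q^2) (q^2) =
     qpoch_inf (q^30) (q^50) * qpoch_inf (q^20) (q^50) * qpoch_inf (q^50) (q^50)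
   - \<zeta>^2 * (qpoch_inf (q^20) (q^50) * qpoch_inf (q^30) (q^50) * qpoch_inf (q^50) (q^50))
   + \<zeta>^4 * q^2 * (qpoch_inf (q^10) (q^50) * qpoch_inf (q^40) (q^50) * qpoch_inf (q^50) (q^50))
   - \<zeta>^3 * q^2 * (qpoch_inf (q^40) (q^50) * qpoch_inf (q^10) (q^50) * qpoch_inf (q^50) (q^50))"
    using theta_dissect[OF q z(1)] unfolding t1 .
  have rF: "qpoch_inf (-1) (q^25) = 2 * qpoch_inf (-(q^25)) (q^25)"
    using qp_shift[OF norm_pow_lt1[OF q(1)], of 25 "-1"] by simp
  have rG: "qpoch_inf (q^20) (q^50) = qpoch_inf (-(q^10)) (q^25) * qpoch_inf (q^10) (q^25)"
    using qp_sq[OF norm_pow_lt1[OF q(1)], of 25 "q^10"] by (simp flip: power_mult)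
  have rH: "qpoch_inf (q^30) (q^50) = qpoch_inf (-(q^15)) (q^25) * qpoch_inf (q^15) (q^25)"
    using qp_sq[OF norm_pow_lt1[OF q(1)], of 25 "q^15"] by (simp flip: power_mult)
  have rI: "qpoch_inf (q^10) (q^50) = qpoch_inf (-(q^5)) (q^25) * qpoch_inf (q^5) (q^25)"
    using qp_sq[OF norm_pow_lt1[OF q(1)], of 25 "q^5"] by (simp flip: power_mult)
  have rJ: "qpoch_inf (q^40) (q^50) = qpoch_inf (-(q^20)) (q^25) * qpoch_inf (q^20) (q^25)"
    using qp_sq[OF norm_pow_lt1[OF q(1)], of 25 "q^20"] by (simp flip: power_mult)
  have rK: "qpoch_inf (q^10) (q^10) = qpoch_inf (q^10) (q^50) * qpoch_inf (q^20) (q^50) * qpoch_inf (q^30) (q^50)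
      * qpoch_inf (q^40) (q^50) * qpoch_inf (q^50) (q^50)"
    using qp_split5[OF norm_pow_lt1[OF q(1)], of 10 "q^10"] by (simp flip: power_mult power_add)
  have rL: "qpoch_inf (q^50) (q^50) = qpoch_inf (-(q^25)) (q^25) * qpoch_inf (q^25) (q^25)"
    using qp_sq[OF norm_pow_lt1[OF q(1)], of 25 "q^25"] by (simp flip: power_mult)
  have rM: "qpoch_inf (q^25) (q^25) = qpoch_inf (q^25) (q^50) * qpoch_inf (q^50) (q^50)"
    using qp_split2[OF norm_pow_lt1[OF q(1)], of 25 "q^25"] by (simp flip: power_mult power_add)
  have rZ: "(\<zeta> + \<zeta>^4)*(1 - \<zeta>^2) = \<zeta>^4 - \<zeta>^3" using z(1) by algebra
  have d: "q^50 / q^20 = q^30" "q^25 / q^10 = q^15" "q^50 / q^10 = q^40" "q^25 / q^5 = q^20"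
    using q0 by (simp_all add: pow_div)
  have nzZ: "qpoch_inf (\<zeta>*q^2) (q^2) \<noteq> 0" "qpoch_inf (inverse \<zeta>*q^2) (q^2) \<noteq> 0"
  proof -
    have nq2: "norm (q^2) < 1" by (rule norm_pow_lt1[OF q(1)]) simp
    have "norm (\<zeta>*q^2) < 1" "norm (inverse \<zeta>*q^2) < 1" using nz1 nq2 by (simp_all add: norm_mult norm_inverse)
    thus "qpoch_inf (\<zeta>*q^2) (q^2) \<noteq> 0" "qpoch_inf (inverse \<zeta>*q^2) (q^2) \<noteq> 0"
      using qp_nonzero[OF nq2] by auto
  qed
  have nzq2: "qpoch_inf q (q^2) \<noteq> 0" by (rule qp_nonzero) (auto intro: norm_pow_lt1 q)
  note nzp = qp_nz_pow[OF q]
  show ?thesis unfolding qtheta_inf_def d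
    by (rule final_alg[OF rA rB rC rD rE rPsi rTheta rF rG rH rI rJ rK rL rM rZ];
        (rule nzZ nzq2 z2 | (rule nzp; simp)))
qed

lemma qp_zero_base: "qpoch_inf z 0 = 1 - z"
proof -
  have "qpoch_inf 0 0 = 1" by (simp add: qpoch_inf_def)
  thus ?thesis using qp_shift[of 0 z] by simp
qed

theorem proposition6p1:
  fixes q \<zeta> :: complex
  assumes "norm q < 1"
    and "\<zeta> ^ 5 = 1" and "\<zeta> \<noteq> 1"
  shows "qpoch_inf (q^2) (q^2) /
           (qpoch_inf q (q^2) * qpoch_inf (\<zeta> * q^2) (q^2) * qpoch_inf (inverse \<zeta> * q^2) (q^2))
       = qpoch_inf (q^25) (q^25) * qtheta_inf (q^20) (q^50)
           / (qtheta_inf (q^10) (q^25) * qtheta_inf (q^10) (q^50))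
         + (\<zeta> + \<zeta>^4) * q^5 * qpoch_inf (q^50) (q^50)
           / (qpoch_inf (q^25) (q^50) * qtheta_inf (q^20) (q^50))
         + q * qpoch_inf (q^25) (q^25) / qtheta_inf (q^5) (q^25)
         + (\<zeta> + \<zeta>^4) * q^2 * qpoch_inf (q^25) (q^25) / qtheta_inf (q^10) (q^25)
         + (\<zeta> + \<zeta>^4) * q^3 * qpoch_inf (q^25) (q^25) * qtheta_inf (q^10) (q^50)
           / (qtheta_inf (q^5) (q^25) * qtheta_inf (q^20) (q^50))
         + q^3 * qpoch_inf (q^50) (q^50)
           / (qpoch_inf (q^25) (q^50) * qtheta_inf (q^10) (q^50))"
proof (cases "q = 0")
  case True
  thus ?thesis by (simp add: qp_zero_base qtheta_inf_def)
next
  case False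
  thus ?thesis by (rule main_nz[OF assms(1) _ assms(2,3)])
qed

end
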